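(* Let $k$ be an algebraically closed field of characteristic zero and let $G=N\rtimes H$ be a finite group with normal subgroup $N$ and complement $H$, so that $(G,H,N)$ is a factorized group. Then the bismash product $k^H\# kN$ is isomorphic as a $k$-algebra to the group algebra $k(\mathbb Z_{|H|}\times N)$.
   Context: A factorized group $(G,L,F)$ is a finite group $G$ with subgroups $L,F$ such that $L\cap F=1$ and $G=LF$; each $lf$ ($l\in L$, $f\in F$) is uniquely $({}^{[l]}f)(l^{[f]})$ with ${}^{[l]}f\in F$, $l^{[f]}\in L$. The bismash product $k^L\# kF$ is the algebra with basis $l\# f$ ($l\in L$, $f\in F$) and multiplication $(l\# f)(\bar l\#\bar f)=\delta_{l^{[f]},\bar l}\, l\#(f\bar f)$, unit $\sum_{l} l\#1$. Here $L=H$ and $F=N$. *)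

theory Defs
  imports "HOL-Algebra.Algebra" "HOL-Computational_Algebra.Polynomial"
begin

definition alg_closed :: "'k::field itself \<Rightarrow> bool" where
  "alg_closed _ \<longleftrightarrow> (\<forall>p::'k poly. degree p > 0 \<longrightarrow> (\<exists>x. poly p x = 0))"

definition factorized_group :: "('g, 'm) monoid_scheme \<Rightarrow> 'g set \<Rightarrow> 'g set \<Rightarrow> bool" where
  "factorized_group G L F \<longleftrightarrow> group G \<and> finite (carrier G) \<and> subgroup L G \<and> subgroup F G
     \<and> L \<inter> F = {\<one>\<^bsub>G\<^esub>} \<and> L <#>\<^bsub>G\<^esub> F = carrier G"

definition ract :: "('g, 'm) monoid_scheme \<Rightarrow> 'g set \<Rightarrow> 'g set \<Rightarrow> 'g \<Rightarrow> 'g \<Rightarrow> 'g" where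
  "ract G L F l f = (THE l'. l' \<in> L \<and> (\<exists>f'\<in>F. l \<otimes>\<^bsub>G\<^esub> f = f' \<otimes>\<^bsub>G\<^esub> l'))"

definition lact :: "('g, 'm) monoid_scheme \<Rightarrow> 'g set \<Rightarrow> 'g set \<Rightarrow> 'g \<Rightarrow> 'g \<Rightarrow> 'g" where
  "lact G L F l f = (THE f'. f' \<in> F \<and> (\<exists>l'\<in>L. l \<otimes>\<^bsub>G\<^esub> f = f' \<otimes>\<^bsub>G\<^esub> l'))"

text \<open>Bismash product k^L # kF: an element is the coefficient function on basis pairs (l,f),
  i.e. the element sum a(l,f) l#f; supported on L \<times> F.  Addition and scalar multiplication
  are pointwise.  Multiplication extends (l#f)(l'#f') = \<delta>_{l^[f],l'} l#(f f') bilinearly.\<close>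
definition bismash_carrier :: "'g set \<Rightarrow> 'g set \<Rightarrow> ('g \<times> 'g \<Rightarrow> 'k::field) set" where
  "bismash_carrier L F = {a. \<forall>x. x \<notin> L \<times> F \<longrightarrow> a x = 0}"

definition bismash_mult :: "('g, 'm) monoid_scheme \<Rightarrow> 'g set \<Rightarrow> 'g set
    \<Rightarrow> ('g \<times> 'g \<Rightarrow> 'k::field) \<Rightarrow> ('g \<times> 'g \<Rightarrow> 'k) \<Rightarrow> ('g \<times> 'g \<Rightarrow> 'k)" where
  "bismash_mult G L F a b = (\<lambda>(l, g).
     if l \<in> L \<and> g \<in> F then
       (\<Sum>(f, f') \<in> F \<times> F. if f \<otimes>\<^bsub>G\<^esub> f' = g then a (l, f) * b (ract G L F l f, f') else 0)
     else 0)"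

definition bismash_one :: "('g, 'm) monoid_scheme \<Rightarrow> 'g set \<Rightarrow> 'g set \<Rightarrow> ('g \<times> 'g \<Rightarrow> 'k::field)" where
  "bismash_one G L F = (\<lambda>(l, f). if l \<in> L \<and> f = \<one>\<^bsub>G\<^esub> then 1 else 0)"

definition galg_carrier :: "('g, 'm) monoid_scheme \<Rightarrow> ('g \<Rightarrow> 'k::field) set" where
  "galg_carrier K = {a. \<forall>x. x \<notin> carrier K \<longrightarrow> a x = 0}"

definition galg_mult :: "('g, 'm) monoid_scheme \<Rightarrow> ('g \<Rightarrow> 'k::field) \<Rightarrow> ('g \<Rightarrow> 'k) \<Rightarrow> ('g \<Rightarrow> 'k)" where
  "galg_mult K a b = (\<lambda>z. if z \<in> carrier K then
       (\<Sum>x \<in> carrier K. a x * b (inv\<^bsub>K\<^esub> x \<otimes>\<^bsub>K\<^esub> z)) else 0)"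

definition galg_one :: "('g, 'm) monoid_scheme \<Rightarrow> ('g \<Rightarrow> 'k::field)" where
  "galg_one K = (\<lambda>z. if z = \<one>\<^bsub>K\<^esub> then 1 else 0)"

definition kalg_iso ::
  "('a \<Rightarrow> 'k::field) set \<Rightarrow> (('a \<Rightarrow> 'k) \<Rightarrow> ('a \<Rightarrow> 'k) \<Rightarrow> ('a \<Rightarrow> 'k)) \<Rightarrow> ('a \<Rightarrow> 'k)
   \<Rightarrow> ('b \<Rightarrow> 'k) set \<Rightarrow> (('b \<Rightarrow> 'k) \<Rightarrow> ('b \<Rightarrow> 'k) \<Rightarrow> ('b \<Rightarrow> 'k)) \<Rightarrow> ('b \<Rightarrow> 'k)
   \<Rightarrow> (('a \<Rightarrow> 'k) \<Rightarrow> ('b \<Rightarrow> 'k)) \<Rightarrow> bool" where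
  "kalg_iso A mA oA B mB oB \<phi> \<longleftrightarrow>
     bij_betw \<phi> A B
     \<and> (\<forall>a\<in>A. \<forall>b\<in>A. \<phi> (\<lambda>x. a x + b x) = (\<lambda>y. \<phi> a y + \<phi> b y))
     \<and> (\<forall>c. \<forall>a\<in>A. \<phi> (\<lambda>x. c * a x) = (\<lambda>y. c * \<phi> a y))
     \<and> (\<forall>a\<in>A. \<forall>b\<in>A. \<phi> (mA a b) = mB (\<phi> a) (\<phi> b))
     \<and> \<phi> oA = oB"

end

theory Submission imports Defs begin

lemma card_roots_rsqf:
  fixes p :: "'k::field_char_0 poly"
  assumes ac: "alg_closed TYPE('k)" and "rsquarefree p"
  shows "card {x. poly p x = 0} = degree p"
  using assms(2)
proof (induction "degree p" arbitrary: p)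
  case 0
  then have "p \<noteq> 0" by (simp add: rsquarefree_def)
  from 0 obtain c where "p = [:c:]" by (metis degree_eq_zeroE)
  with \<open>p \<noteq> 0\<close> have "{x. poly p x = 0} = {}" by auto
  then show ?case using 0 by simp
next
  case (Suc d)
  then have p0: "p \<noteq> 0" by (simp add: rsquarefree_def)
  from ac Suc.hyps(2) obtain r where r: "poly p r = 0" unfolding alg_closed_def by (metis zero_less_Suc)
  then obtain q where pq: "p = [:-r,1:] * q" using poly_eq_0_iff_dvd by blast
  have q0: "q \<noteq> 0" using p0 pq by auto
  have "degree p = degree [:-r,1:] + degree q" unfolding pq by (rule degree_mult_eq) (use q0 in auto)
  hence dq: "degree q = d" using Suc.hyps(2) by simp
  have ord: "order a p = order a [:-r,1:] + order a q" for a
    using p0 pq order_mult by metis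
  have o1: "order r [:-r,1:] = 1" using order_power_n_n[of r 1] by simp
  have le1: "order a p \<le> 1" for a using Suc.prems unfolding rsquarefree_def by (metis le_refl zero_le)
  have sq: "rsquarefree q" unfolding rsquarefree_def
  proof (intro conjI allI q0)
    fix a show "order a q = 0 \<or> order a q = 1" using le1[of a] ord[of a] by linarith
  qed
  have qr: "order r q = 0" using le1[of r] ord[of r] o1 by linarith
  hence "poly q r \<noteq> 0" using order_root q0 by blast
  moreover have "{x. poly p x = 0} = insert r {x. poly q x = 0}" using pq by auto
  ultimately have "card {x. poly p x = 0} = Suc (card {x. poly q x = 0})"
    using poly_roots_finite[OF q0] by simp
  then show ?case using Suc.hyps(1)[OF dq[symmetric] sq] Suc.hyps(2) dq by simp
qed

lemma card_unity_roots:
  assumes ac: "alg_closed TYPE('k::field_char_0)" and n: "n > 0"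
  shows "card {x::'k. x ^ n = 1} = n"
proof -
  define p :: "'k poly" where "p = monom 1 n + [:-1:]"
  have ev: "poly p x = x ^ n - 1" for x by (simp add: p_def poly_monom)
  have dp: "degree p = n" using n unfolding p_def
    by (simp add: degree_add_eq_left degree_monom_eq)
  have "pderiv p = monom (of_nat n) (n - 1)" unfolding p_def
    by (simp add: pderiv_monom pderiv_add pderiv_pCons)
  hence evd: "poly (pderiv p) x = of_nat n * x ^ (n - 1)" for x by (simp add: poly_monom)
  have "rsquarefree p" unfolding rsquarefree_roots
  proof (intro allI notI)
    fix a assume "poly p a = 0 \<and> poly (pderiv p) a = 0"
    then have "a ^ n = 1" "a ^ (n-1) = 0" using n ev evd by auto
    then show False using n by (metis power_eq_0_iff zero_neq_one)
  qed
  from card_roots_rsqf[OF ac this] dp ev show ?thesis by simp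
qed

lemma sum_int_range: "(\<Sum>m\<in>{0..<int n}. f m) = (\<Sum>k<n. f (int k))"
proof -
  have "{0..<int n} = int ` {..<n}" by (simp add: image_int_atLeastLessThan lessThan_atLeast0)
  then show ?thesis by (simp add: sum.reindex)
qed

lemma orth1:
  fixes r s :: "'k::field"
  assumes n: "n > 0" and r: "r ^ n = 1" and s: "s ^ n = 1"
  shows "(\<Sum>m\<in>{0..<int n}. r ^ nat m * inverse s ^ nat m) = (if r = s then of_nat n else 0)"
proof -
  have s0: "s \<noteq> 0" using s n by (metis power_0_left zero_neq_one neq0_conv)
  have "(\<Sum>m\<in>{0..<int n}. r ^ nat m * inverse s ^ nat m) = (\<Sum>k<n. (r * inverse s) ^ k)"
    by (simp add: sum_int_range power_mult_distrib)
  also have "\<dots> = (if r = s then of_nat n else 0)"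
  proof (cases "r = s")
    case True then show ?thesis using s0 by simp
  next
    case False
    then have "r * inverse s \<noteq> 1" using s0 by (metis divide_inverse divide_self_if eq_divide_eq)
    moreover have "(r * inverse s) ^ n = 1" using r s by (simp add: power_mult_distrib power_inverse)
    ultimately show ?thesis using False by (simp add: sum_gp_strict)
  qed
  finally show ?thesis .
qed

lemma orth2:
  assumes ac: "alg_closed TYPE('k::field_char_0)" and n: "n > 0" and i: "i < n" and j: "j < n"
  shows "(\<Sum>r\<in>{x::'k. x ^ n = 1}. r ^ i * inverse r ^ j) = (if i = j then of_nat n else 0)"
proof (cases "i = j")
  case True
  have "r ^ i * inverse r ^ i = 1" if "r ^ n = 1" for r :: 'k
  proof -
    have "r \<noteq> 0" by (rule ccontr) (use that n in \<open>simp add: zero_power\<close>)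
    then show ?thesis by (simp add: power_inverse)
  qed
  then show ?thesis using True card_unity_roots[OF ac n] by simp
next
  case False
  define R where "R = {x::'k. x ^ n = 1}"
  define g where "g r = r ^ i * inverse r ^ j" for r :: 'k
  have nz: "r \<noteq> 0" if "r \<in> R" for r by (rule ccontr) (use that n in \<open>simp add: R_def zero_power\<close>)
  define d where "d = (if i > j then i - j else j - i)"
  have d0: "d > 0" "d < n" using False i j unfolding d_def by auto
  have sub: "{r\<in>R. g r = 1} \<subseteq> {x. x ^ d = 1}"
  proof
    fix r assume "r \<in> {r\<in>R. g r = 1}"
    then have r0: "r \<noteq> 0" and gr: "r ^ i * inverse r ^ j = 1" using nz unfolding g_def by auto
    have "r ^ i = r ^ i * inverse r ^ j * r ^ j" using r0 by (simp add: power_inverse)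
    then have e: "r ^ i = r ^ j" using gr by simp
    show "r \<in> {x. x ^ d = 1}"
    proof (cases "i > j")
      case True
      then have "r ^ i = r ^ j * r ^ (i - j)" by (metis le_add_diff_inverse less_imp_le power_add)
      then show ?thesis using e r0 True unfolding d_def by auto
    next
      case False
      then have "r ^ j = r ^ i * r ^ (j - i)" by (metis le_add_diff_inverse not_less power_add)
      then show ?thesis using e r0 False unfolding d_def by auto
    qed
  qed
  have fd: "finite {x::'k. x ^ d = 1}"
    using card_unity_roots[OF ac d0(1)] d0(1) card_ge_0_finite by force
  have "card {r\<in>R. g r = 1} \<le> d"
    using card_mono[OF fd sub] card_unity_roots[OF ac d0(1)] by simp
  then have "card {r\<in>R. g r = 1} < card R" using d0 card_unity_roots[OF ac n] unfolding R_def by simp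
  then have "R \<noteq> {r\<in>R. g r = 1}" by auto
  then obtain s where sR: "s \<in> R" and gs: "g s \<noteq> 1" by blast
  have mult: "g (s * r) = g s * g r" for r
    by (simp add: g_def power_mult_distrib inverse_mult_distrib mult_ac)
  have "(\<Sum>r\<in>R. g (s * r)) = (\<Sum>r\<in>R. g r)"
  proof (rule sum.reindex_bij_witness[of R "\<lambda>r. inverse s * r" "\<lambda>r. s * r"])
    fix r assume "r \<in> R" then show "inverse s * (s * r) = r" using nz sR by simp
  next
    fix r assume "r \<in> R" then show "s * (inverse s * r) = r" using nz sR by simp
  next
    fix r assume "r \<in> R" then show "inverse s * r \<in> R" using sR unfolding R_def
      by (simp add: power_mult_distrib power_inverse)
  next
    fix r assume "r \<in> R" then show "s * r \<in> R" using sR unfolding R_def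
      by (simp add: power_mult_distrib)
  qed simp
  then have "g s * (\<Sum>r\<in>R. g r) = (\<Sum>r\<in>R. g r)" by (simp add: mult sum_distrib_left)
  then have "(g s - 1) * (\<Sum>r\<in>R. g r) = 0" by (simp add: algebra_simps)
  then have "(\<Sum>r\<in>R. g r) = 0" using gs by simp
  then show ?thesis using False unfolding R_def g_def by simp
qed


lemma pow_mod_eq:
  fixes x :: "'k::field"
  assumes "x ^ n = 1" "a = b + n"
  shows "x ^ a = x ^ b"
  using assms by (simp add: power_add)

lemma shift_pow:
  fixes x :: "'k::field"
  assumes x: "x ^ n = 1" and x0: "x \<noteq> 0" and m: "m \<in> {0..<int n}" and m1: "m1 \<in> {0..<int n}"
  shows "inverse x ^ nat ((m - m1) mod int n) = inverse x ^ nat m * x ^ nat m1"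
proof -
  define k where "k = nat ((m - m1) mod int n)"
  have xi: "inverse x ^ n = 1" using x by (simp add: power_inverse)
  have "k + nat m1 = nat m \<or> k + nat m1 = nat m + n"
  proof (cases "m1 \<le> m")
    case True
    then have "(m - m1) mod int n = m - m1" using m m1 by (simp add: mod_pos_pos_trivial)
    then show ?thesis using True m m1 unfolding k_def by simp arith
  next
    case False
    have "(m - m1 + int n) mod int n = m - m1 + int n"
      by (rule mod_pos_pos_trivial) (use False m m1 in auto)
    then have "(m - m1) mod int n = m - m1 + int n" by simp
    then show ?thesis using False m m1 unfolding k_def by simp arith
  qed
  then have "inverse x ^ (k + nat m1) = inverse x ^ nat m"
    using pow_mod_eq[OF xi] by metis
  then have "inverse x ^ k * inverse x ^ nat m1 * x ^ nat m1 = inverse x ^ nat m * x ^ nat m1"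
    by (simp add: power_add)
  moreover have "inverse x ^ nat m1 * x ^ nat m1 = 1" using x0 by (simp add: power_inverse)
  ultimately show ?thesis unfolding k_def by (simp add: mult.assoc)
qed


context
  fixes H N :: "'g set" and n :: nat and \<rho> :: "'g \<Rightarrow> 'k::field_char_0" and dv :: "'g \<Rightarrow> 'g \<Rightarrow> 'g"
  assumes ac: "alg_closed TYPE('k)" and n: "card H = n" "n > 0" and finH: "finite H" and finN: "finite N"
    and \<rho>: "bij_betw \<rho> H {x. x ^ n = 1}"
    and dv: "\<And>f g. f \<in> N \<Longrightarrow> g \<in> N \<Longrightarrow> dv f g \<in> N"
begin

lemma rho_pow: "l \<in> H \<Longrightarrow> \<rho> l ^ n = 1"
  using \<rho> by (auto simp: bij_betw_def)

lemma rho_nz: "l \<in> H \<Longrightarrow> \<rho> l \<noteq> 0"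
  using rho_pow n(2) by (metis power_0_left zero_neq_one not_gr0)

lemma O1H: "l \<in> H \<Longrightarrow> l' \<in> H \<Longrightarrow>
  (\<Sum>m\<in>{0..<int n}. \<rho> l ^ nat m * inverse (\<rho> l') ^ nat m) = (if l = l' then of_nat n else 0)"
  using orth1[OF n(2) rho_pow rho_pow, of l l'] \<rho> by (auto simp: bij_betw_def inj_on_def)

lemma O2H: "m \<in> {0..<int n} \<Longrightarrow> m' \<in> {0..<int n} \<Longrightarrow>
  (\<Sum>l\<in>H. \<rho> l ^ nat m' * inverse (\<rho> l) ^ nat m) = (if m = m' then of_nat n else 0)"
proof -
  assume m: "m \<in> {0..<int n}" and m': "m' \<in> {0..<int n}"
  have "(\<Sum>l\<in>H. \<rho> l ^ nat m' * inverse (\<rho> l) ^ nat m) = (\<Sum>r\<in>{x. x ^ n = 1}. r ^ nat m' * inverse r ^ nat m)"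
    using sum.reindex_bij_betw[OF \<rho>, of "\<lambda>r. r ^ nat m' * inverse r ^ nat m"] by simp
  also have "\<dots> = (if nat m' = nat m then of_nat n else 0)"
    by (rule orth2[OF ac n(2)]) (use m m' in auto)
  finally show ?thesis using m m' by auto
qed

definition "phi a = (\<lambda>(m, f). if m \<in> {0..<int n} \<and> f \<in> N then
    (\<Sum>l\<in>H. inverse (\<rho> l) ^ nat m * a (l, f)) / of_nat n else 0)"

definition "psi b = (\<lambda>(l, f). if l \<in> H \<and> f \<in> N then
    (\<Sum>m\<in>{0..<int n}. \<rho> l ^ nat m * b (m, f)) else 0)"

lemma psi_phi:
  assumes a: "\<forall>x. x \<notin> H \<times> N \<longrightarrow> a x = 0"
  shows "psi (phi a) = a"
proof
  fix x show "psi (phi a) x = a x"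
  proof (cases x)
    case (Pair l f)
    show ?thesis
    proof (cases "l \<in> H \<and> f \<in> N")
      case False then show ?thesis using a Pair by (auto simp: psi_def)
    next
      case True
      have "psi (phi a) x = (\<Sum>m\<in>{0..<int n}. \<rho> l ^ nat m * ((\<Sum>l'\<in>H. inverse (\<rho> l') ^ nat m * a (l', f)) / of_nat n))"
        using True Pair by (simp add: psi_def phi_def)
      also have "\<dots> = (\<Sum>l'\<in>H. a (l', f) / of_nat n * (\<Sum>m\<in>{0..<int n}. \<rho> l ^ nat m * inverse (\<rho> l') ^ nat m))"
        by (simp add: sum_distrib_left sum_divide_distrib mult_ac) (rule sum.swap)
      also have "\<dots> = (\<Sum>l'\<in>H. a (l', f) / of_nat n * (if l = l' then of_nat n else 0))"
        using True by (intro sum.cong refl) (simp add: O1H)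
      also have "\<dots> = a (l, f)" using True finH n by (simp add: if_distrib cong: if_cong)
      finally show ?thesis using Pair by simp
    qed
  qed
qed

lemma phi_psi:
  assumes b: "\<forall>x. x \<notin> {0..<int n} \<times> N \<longrightarrow> b x = 0"
  shows "phi (psi b) = b"
proof
  fix x show "phi (psi b) x = b x"
  proof (cases x)
    case (Pair m f)
    show ?thesis
    proof (cases "m \<in> {0..<int n} \<and> f \<in> N")
      case False then show ?thesis using b Pair by (auto simp: phi_def)
    next
      case True
      have "phi (psi b) x = (\<Sum>l\<in>H. inverse (\<rho> l) ^ nat m * (\<Sum>m'\<in>{0..<int n}. \<rho> l ^ nat m' * b (m', f))) / of_nat n"
        using True Pair by (simp add: psi_def phi_def)
      also have "\<dots> = (\<Sum>m'\<in>{0..<int n}. b (m', f) / of_nat n * (\<Sum>l\<in>H. \<rho> l ^ nat m' * inverse (\<rho> l) ^ nat m))"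
        by (simp add: sum_distrib_left sum_divide_distrib mult_ac) (rule sum.swap)
      also have "\<dots> = (\<Sum>m'\<in>{0..<int n}. b (m', f) / of_nat n * (if m = m' then of_nat n else 0))"
        using True by (intro sum.cong refl) (simp add: O2H)
      also have "\<dots> = b (m, f)" using True n by (simp add: if_distrib cong: if_cong)
      finally show ?thesis using Pair by simp
    qed
  qed
qed


definition "bm a b = (\<lambda>(l, g). if l \<in> H \<and> g \<in> N then (\<Sum>f\<in>N. a (l, f) * b (l, dv f g)) else 0)"

definition "gm a b = (\<lambda>(m, g). if m \<in> {0..<int n} \<and> g \<in> N then
   (\<Sum>m1\<in>{0..<int n}. \<Sum>f\<in>N. a (m1, f) * b ((m - m1) mod int n, dv f g)) else 0)"

lemma phi_mult: "phi (bm a b) = gm (phi a) (phi b)"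
proof
  fix x show "phi (bm a b) x = gm (phi a) (phi b) x"
  proof (cases x)
    case (Pair m g)
    show ?thesis
    proof (cases "m \<in> {0..<int n} \<and> g \<in> N")
      case False then show ?thesis using Pair by (auto simp: phi_def gm_def)
    next
      case True
      define Yt where "Yt m1 f l l' = a (l, f) * b (l', dv f g) * inverse (\<rho> l') ^ nat m / of_nat n / of_nat n
          * (\<rho> l' ^ nat m1 * inverse (\<rho> l) ^ nat m1)" for m1 f l l'
      have mm: "(m - m1) mod int n \<in> {0..<int n}" for m1 using n(2) by simp
      have "gm (phi a) (phi b) x = (\<Sum>m1\<in>{0..<int n}. \<Sum>f\<in>N.
          ((\<Sum>l\<in>H. inverse (\<rho> l) ^ nat m1 * a (l, f)) / of_nat n) *
          ((\<Sum>l'\<in>H. inverse (\<rho> l') ^ nat ((m - m1) mod int n) * b (l', dv f g)) / of_nat n))"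
        using True Pair dv mm by (auto simp: gm_def phi_def intro!: sum.cong)
      also have "\<dots> = (\<Sum>m1\<in>{0..<int n}. \<Sum>f\<in>N. \<Sum>l\<in>H. \<Sum>l'\<in>H. Yt m1 f l l')"
      proof (intro sum.cong refl)
        fix m1 f assume m1: "m1 \<in> {0..<int n}" and f: "f \<in> N"
        have "((\<Sum>l\<in>H. inverse (\<rho> l) ^ nat m1 * a (l, f)) / of_nat n) *
          ((\<Sum>l'\<in>H. inverse (\<rho> l') ^ nat ((m - m1) mod int n) * b (l', dv f g)) / of_nat n)
          = ((\<Sum>l\<in>H. inverse (\<rho> l) ^ nat m1 * a (l, f)) / of_nat n) *
          ((\<Sum>l'\<in>H. inverse (\<rho> l') ^ nat m * \<rho> l' ^ nat m1 * b (l', dv f g)) / of_nat n)"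
          using shift_pow[OF rho_pow rho_nz _ m1] True by (intro arg_cong2[where f="(*)"] refl arg_cong2[where f="(/)"] sum.cong) auto
        also have "\<dots> = (\<Sum>l\<in>H. \<Sum>l'\<in>H. Yt m1 f l l')"
          unfolding Yt_def by (simp add: sum_product sum_divide_distrib mult_ac)
        finally show "((\<Sum>l\<in>H. inverse (\<rho> l) ^ nat m1 * a (l, f)) / of_nat n) *
          ((\<Sum>l'\<in>H. inverse (\<rho> l') ^ nat ((m - m1) mod int n) * b (l', dv f g)) / of_nat n)
          = (\<Sum>l\<in>H. \<Sum>l'\<in>H. Yt m1 f l l')" .
      qed
      also have "\<dots> = (\<Sum>f\<in>N. \<Sum>l\<in>H. \<Sum>l'\<in>H. \<Sum>m1\<in>{0..<int n}. Yt m1 f l l')"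
        by (simp only: sum.swap[where A="{0..<int n}"])
      also have "\<dots> = (\<Sum>f\<in>N. \<Sum>l\<in>H. \<Sum>l'\<in>H. a (l, f) * b (l', dv f g) * inverse (\<rho> l') ^ nat m / of_nat n / of_nat n
          * (if l' = l then of_nat n else 0))"
      proof (intro sum.cong refl)
        fix f l l' assume l: "l \<in> H" and l': "l' \<in> H"
        have "(\<Sum>m1\<in>{0..<int n}. Yt m1 f l l') = a (l, f) * b (l', dv f g) * inverse (\<rho> l') ^ nat m / of_nat n / of_nat n
          * (\<Sum>m1\<in>{0..<int n}. \<rho> l' ^ nat m1 * inverse (\<rho> l) ^ nat m1)"
          unfolding Yt_def by (rule sum_distrib_left[symmetric])
        also have "\<dots> = a (l, f) * b (l', dv f g) * inverse (\<rho> l') ^ nat m / of_nat n / of_nat n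
          * (if l' = l then of_nat n else 0)" using O1H[OF l' l] by simp
        finally show "(\<Sum>m1\<in>{0..<int n}. Yt m1 f l l') = a (l, f) * b (l', dv f g) * inverse (\<rho> l') ^ nat m / of_nat n / of_nat n
          * (if l' = l then of_nat n else 0)" .
      qed
      also have "\<dots> = (\<Sum>f\<in>N. \<Sum>l\<in>H. a (l, f) * b (l, dv f g) * inverse (\<rho> l) ^ nat m / of_nat n)"
        using finH n(2) by (intro sum.cong refl) (simp add: if_distrib cong: if_cong)
      also have "\<dots> = phi (bm a b) x"
        using True Pair by (simp add: phi_def bm_def sum_distrib_left sum_divide_distrib mult_ac) (rule sum.swap)
      finally show ?thesis by simp
    qed
  qed
qed


lemma phi_one:
  assumes e: "e \<in> N"
  shows "phi (\<lambda>(l, f). if l \<in> H \<and> f = e then 1 else 0) = (\<lambda>z. if z = (0, e) then 1 else 0)"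
proof
  fix x show "phi (\<lambda>(l, f). if l \<in> H \<and> f = e then 1 else 0) x = (if x = (0, e) then 1 else 0)"
  proof (cases x)
    case (Pair m f)
    show ?thesis
    proof (cases "m \<in> {0..<int n} \<and> f \<in> N")
      case False then show ?thesis using Pair e n(2) by (auto simp: phi_def)
    next
      case True
      show ?thesis
      proof (cases "f = e")
        case False then show ?thesis using Pair True by (simp add: phi_def)
      next
        case fe: True
        have "(\<Sum>l\<in>H. inverse (\<rho> l) ^ nat m) = (\<Sum>l\<in>H. \<rho> l ^ nat 0 * inverse (\<rho> l) ^ nat m)" by simp
        also have "\<dots> = (if m = 0 then of_nat n else 0)" using O2H[of m 0] True n(2) by simp
        finally have "(\<Sum>l\<in>H. inverse (\<rho> l) ^ nat m) = (if m = 0 then of_nat n else 0)" .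
        then show ?thesis using Pair True fe n(2) by (simp add: phi_def)
      qed
    qed
  qed
qed

lemma abstract_iso:
  assumes e: "e \<in> N"
  shows "kalg_iso {a. \<forall>x. x \<notin> H \<times> N \<longrightarrow> a x = 0} bm (\<lambda>(l, f). if l \<in> H \<and> f = e then 1 else 0)
     {a. \<forall>x. x \<notin> {0..<int n} \<times> N \<longrightarrow> a x = 0} gm (\<lambda>z. if z = (0, e) then 1 else 0) phi"
  unfolding kalg_iso_def
proof (intro conjI ballI allI)
  show "bij_betw phi {a. \<forall>x. x \<notin> H \<times> N \<longrightarrow> a x = 0} {a. \<forall>x. x \<notin> {0..<int n} \<times> N \<longrightarrow> a x = 0}"
  proof (rule bij_betw_byWitness[where f'=psi])
    show "\<forall>a\<in>{a. \<forall>x. x \<notin> H \<times> N \<longrightarrow> a x = 0}. psi (phi a) = a" using psi_phi by blast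
    show "\<forall>a\<in>{a. \<forall>x. x \<notin> {0..<int n} \<times> N \<longrightarrow> a x = 0}. phi (psi a) = a" using phi_psi by blast
  qed (auto simp: phi_def psi_def)
next
  fix a b :: "'g \<times> 'g \<Rightarrow> 'k"
  show "phi (\<lambda>x. a x + b x) = (\<lambda>y. phi a y + phi b y)"
    by (auto simp: phi_def sum.distrib distrib_left add_divide_distrib)
next
  fix c :: 'k and a :: "'g \<times> 'g \<Rightarrow> 'k"
  show "phi (\<lambda>x. c * a x) = (\<lambda>y. c * phi a y)"
    by (auto simp: phi_def sum_distrib_left mult_ac)
next
  fix a b :: "'g \<times> 'g \<Rightarrow> 'k"
  show "phi (bm a b) = gm (phi a) (phi b)" by (rule phi_mult)
next
  show "phi (\<lambda>(l, f). if l \<in> H \<and> f = e then 1 else 0) = (\<lambda>z. if z = (0, e) then 1 else 0)"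
    by (rule phi_one[OF e])
qed


lemma abstract_ex:
  assumes e: "e \<in> N"
  shows "\<exists>\<phi> :: ('g \<times> 'g \<Rightarrow> 'k) \<Rightarrow> (int \<times> 'g \<Rightarrow> 'k).
     kalg_iso {a. \<forall>x. x \<notin> H \<times> N \<longrightarrow> a x = 0}
     (\<lambda>a b. \<lambda>(l, g). if l \<in> H \<and> g \<in> N then (\<Sum>f\<in>N. a (l, f) * b (l, dv f g)) else 0)
     (\<lambda>(l, f). if l \<in> H \<and> f = e then 1 else 0)
     {a. \<forall>x. x \<notin> {0..<int n} \<times> N \<longrightarrow> a x = 0}
     (\<lambda>a b. \<lambda>(m, g). if m \<in> {0..<int n} \<and> g \<in> N then
   (\<Sum>m1\<in>{0..<int n}. \<Sum>f\<in>N. a (m1, f) * b ((m - m1) mod int n, dv f g)) else 0)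
     (\<lambda>z. if z = (0, e) then 1 else 0) \<phi>"
  using abstract_iso[OF e] unfolding bm_def[abs_def] gm_def[abs_def] by blast

end


lemma (in group) ract_normal:
  assumes N: "N \<lhd> G" and H: "subgroup H G" and HN: "H \<inter> N = {\<one>}" and l: "l \<in> H" and f: "f \<in> N"
  shows "ract G H N l f = l"
proof -
  have NG: "subgroup N G" using normal_imp_subgroup[OF N] .
  have lc: "l \<in> carrier G" using subgroup.mem_carrier[OF H l] .
  have fc: "f \<in> carrier G" using subgroup.mem_carrier[OF NG f] .
  define u where "u = l \<otimes> f \<otimes> inv l"
  have uN: "u \<in> N" unfolding u_def using normal.inv_op_closed2[OF N lc f] .
  have uc: "u \<in> carrier G" using subgroup.mem_carrier[OF NG uN] .
  have ul: "l \<otimes> f = u \<otimes> l" unfolding u_def using lc fc by (simp add: m_assoc)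
  show ?thesis
    unfolding ract_def
  proof (rule the_equality)
    show "l \<in> H \<and> (\<exists>f'\<in>N. l \<otimes> f = f' \<otimes> l)" using l uN ul by auto
  next
    fix l' assume "l' \<in> H \<and> (\<exists>f'\<in>N. l \<otimes> f = f' \<otimes> l')"
    then obtain f' where l': "l' \<in> H" and f': "f' \<in> N" and eq: "l \<otimes> f = f' \<otimes> l'" by auto
    have l'c: "l' \<in> carrier G" using subgroup.mem_carrier[OF H l'] .
    have f'c: "f' \<in> carrier G" using subgroup.mem_carrier[OF NG f'] .
    have "u \<otimes> l = f' \<otimes> l'" using ul eq by simp
    then have "inv f' \<otimes> u = l' \<otimes> inv l" using lc l'c f'c uc
      by (simp add: inv_solve_left inv_solve_right m_assoc)
    moreover have "inv f' \<otimes> u \<in> N" using NG uN f' by (simp add: subgroup.m_closed subgroup.m_inv_closed)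
    moreover have "l' \<otimes> inv l \<in> H" using H l l' by (simp add: subgroup.m_closed subgroup.m_inv_closed)
    ultimately have "l' \<otimes> inv l = \<one>" using HN by (metis IntI singletonD)
    then have "inv (inv l) = l'" using lc l'c by (intro inv_equality) simp_all
    then show "l' = l" using lc by simp
  qed
qed

theorem mainTheorem12:
  fixes G :: "('g, 'm) monoid_scheme" and H N :: "'g set"
  assumes "alg_closed TYPE('k::field_char_0)"
    and "group G" and "finite (carrier G)"
    and "N \<lhd> G" and "subgroup H G"
    and "H \<inter> N = {\<one>\<^bsub>G\<^esub>}" and "N <#>\<^bsub>G\<^esub> H = carrier G"
  shows "factorized_group G H N \<and>
    (\<exists>\<phi> :: ('g \<times> 'g \<Rightarrow> 'k) \<Rightarrow> (int \<times> 'g \<Rightarrow> 'k).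
       kalg_iso (bismash_carrier H N) (bismash_mult G H N) (bismash_one G H N)
         (galg_carrier (integer_mod_group (card H) \<times>\<times> G\<lparr>carrier := N\<rparr>))
         (galg_mult (integer_mod_group (card H) \<times>\<times> G\<lparr>carrier := N\<rparr>))
         (galg_one (integer_mod_group (card H) \<times>\<times> G\<lparr>carrier := N\<rparr>)) \<phi>)"
proof
  note ac = assms(1)
  interpret G: group G by (rule assms(2))
  have NG: "subgroup N G" using assms(4) normal_imp_subgroup by blast
  have HG: "subgroup H G" by (rule assms(5))
  show "factorized_group G H N"
    unfolding factorized_group_def
    using assms G.commut_normal[OF HG assms(4)] NG by auto
  define n where "n = card H"
  have finH: "finite H" using finite_subset[OF subgroup.subset[OF HG] assms(3)] .
  have finN: "finite N" using finite_subset[OF subgroup.subset[OF NG] assms(3)] .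
  have n0: "n > 0" unfolding n_def using finH subgroup.one_closed[OF HG] card_gt_0_iff by auto
  have cR: "card {x::'k. x ^ n = 1} = n" by (rule card_unity_roots[OF ac n0])
  have finR: "finite {x::'k. x ^ n = 1}" using cR n0 card_ge_0_finite by force
  obtain \<rho> where \<rho>: "bij_betw \<rho> H {x::'k. x ^ n = 1}"
    using finite_same_card_bij[OF finH finR] cR n_def by auto
  define dv where "dv f g = inv\<^bsub>G\<^esub> f \<otimes>\<^bsub>G\<^esub> g" for f g
  have dv: "dv f g \<in> N" if "f \<in> N" "g \<in> N" for f g
    using that NG unfolding dv_def by (simp add: subgroup.m_closed subgroup.m_inv_closed)
  have e: "\<one>\<^bsub>G\<^esub> \<in> N" using subgroup.one_closed[OF NG] .
  define K where "K = integer_mod_group n \<times>\<times> G\<lparr>carrier := N\<rparr>"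
  have cK: "carrier K = {0..<int n} \<times> N" unfolding K_def using n0 by (simp add: carrier_integer_mod_group)
  have grpN: "group (G\<lparr>carrier := N\<rparr>)" using G.subgroup_imp_group[OF NG] .
  have Nc: "f \<in> carrier G" if "f \<in> N" for f using subgroup.mem_carrier[OF NG that] .
  have bm_pt: "bismash_mult G H N a b x = (\<lambda>(l, g). if l \<in> H \<and> g \<in> N then (\<Sum>f\<in>N. a (l, f) * b (l, dv f g)) else 0) x"
    for a b :: "'g \<times> 'g \<Rightarrow> 'k" and x :: "'g \<times> 'g"
  proof -
    obtain l g where x: "x = (l, g)" by (cases x)
    show "bismash_mult G H N a b x = (\<lambda>(l, g). if l \<in> H \<and> g \<in> N then (\<Sum>f\<in>N. a (l, f) * b (l, dv f g)) else 0) x"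
    proof (cases "l \<in> H \<and> g \<in> N")
      case False then show ?thesis using x by (auto simp: bismash_mult_def)
    next
      case True
      have "(\<Sum>(f, f') \<in> N \<times> N. if f \<otimes>\<^bsub>G\<^esub> f' = g then a (l, f) * b (ract G H N l f, f') else 0)
          = (\<Sum>f\<in>N. \<Sum>f'\<in>N. if f \<otimes>\<^bsub>G\<^esub> f' = g then a (l, f) * b (ract G H N l f, f') else 0)"
        by (rule sum.cartesian_product[symmetric])
      also have "\<dots> = (\<Sum>f\<in>N. \<Sum>f'\<in>N. if f' = dv f g then a (l, f) * b (l, f') else 0)"
      proof (intro sum.cong refl)
        fix f f' assume f: "f \<in> N" and f': "f' \<in> N"
        have "f \<otimes>\<^bsub>G\<^esub> f' = g \<longleftrightarrow> f' = dv f g" unfolding dv_def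
          using G.inv_solve_left[OF Nc[OF f'] Nc[OF f] Nc[of g]] True by auto
        then show "(if f \<otimes>\<^bsub>G\<^esub> f' = g then a (l, f) * b (ract G H N l f, f') else 0)
           = (if f' = dv f g then a (l, f) * b (l, f') else 0)"
          using G.ract_normal[OF assms(4) HG assms(6)] True f by simp
      qed
      also have "\<dots> = (\<Sum>f\<in>N. a (l, f) * b (l, dv f g))"
        using finN dv True by (intro sum.cong refl) (simp add: sum.delta')
      finally show ?thesis using x True by (simp add: bismash_mult_def)
    qed
  qed
  have bm: "(bismash_mult G H N :: ('g \<times> 'g \<Rightarrow> 'k) \<Rightarrow> ('g \<times> 'g \<Rightarrow> 'k) \<Rightarrow> ('g \<times> 'g \<Rightarrow> 'k)) = (\<lambda>a b. \<lambda>(l, g). if l \<in> H \<and> g \<in> N then (\<Sum>f\<in>N. a (l, f) * b (l, dv f g)) else 0)"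
    by (intro ext, rule bm_pt)
  have bo: "(bismash_one G H N :: 'g \<times> 'g \<Rightarrow> 'k) = (\<lambda>(l, f). if l \<in> H \<and> f = \<one>\<^bsub>G\<^esub> then 1 else 0)"
    by (simp add: bismash_one_def)
  have gc: "(galg_carrier K :: (int \<times> 'g \<Rightarrow> 'k) set) = {a. \<forall>x. x \<notin> {0..<int n} \<times> N \<longrightarrow> a x = 0}"
    unfolding galg_carrier_def cK ..
  have go: "(galg_one K :: int \<times> 'g \<Rightarrow> 'k) = (\<lambda>z. if z = (0, \<one>\<^bsub>G\<^esub>) then 1 else 0)"
    unfolding galg_one_def K_def by (simp add: DirProd_def)
  have gm_pt: "galg_mult K a b z = (\<lambda>(m, g). if m \<in> {0..<int n} \<and> g \<in> N then
   (\<Sum>m1\<in>{0..<int n}. \<Sum>f\<in>N. a (m1, f) * b ((m - m1) mod int n, dv f g)) else 0) z"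
    for a b :: "int \<times> 'g \<Rightarrow> 'k" and z :: "int \<times> 'g"
  proof -
    obtain m g where z: "z = (m, g)" by (cases z)
    show "galg_mult K a b z = (\<lambda>(m, g). if m \<in> {0..<int n} \<and> g \<in> N then
   (\<Sum>m1\<in>{0..<int n}. \<Sum>f\<in>N. a (m1, f) * b ((m - m1) mod int n, dv f g)) else 0) z"
    proof (cases "m \<in> {0..<int n} \<and> g \<in> N")
      case False then show ?thesis using z cK by (auto simp: galg_mult_def)
    next
      case True
      have "(\<Sum>x\<in>carrier K. a x * b (inv\<^bsub>K\<^esub> x \<otimes>\<^bsub>K\<^esub> z))
          = (\<Sum>(m1, f)\<in>{0..<int n} \<times> N. a (m1, f) * b ((m - m1) mod int n, dv f g))"
        unfolding cK
      proof (intro sum.cong refl)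
        fix x assume "x \<in> {0..<int n} \<times> N"
        then obtain m1 f where x: "x = (m1, f)" "m1 \<in> {0..<int n}" "f \<in> N" by (cases x) auto
        have "m1 \<in> carrier (integer_mod_group n)" using x n0 by (simp add: carrier_integer_mod_group)
        then have "inv\<^bsub>K\<^esub> x = ((- m1) mod int n, inv\<^bsub>G\<^esub> f)" unfolding K_def
          using x grpN NG by (simp add: inv_DirProd)
        moreover have "((- m1) mod int n + m) mod int n = (m - m1) mod int n"
          by (simp add: mod_add_left_eq)
        ultimately show "a x * b (inv\<^bsub>K\<^esub> x \<otimes>\<^bsub>K\<^esub> z) =
           (case x of (m1, f) \<Rightarrow> a (m1, f) * b ((m - m1) mod int n, dv f g))"
          using x z unfolding K_def dv_def by (simp add: DirProd_def)
      qed
      also have "\<dots> = (\<Sum>m1\<in>{0..<int n}. \<Sum>f\<in>N. a (m1, f) * b ((m - m1) mod int n, dv f g))"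
        by (rule sum.cartesian_product[symmetric])
      finally show ?thesis using z True cK by (simp add: galg_mult_def)
    qed
  qed
  have gmK: "(galg_mult K :: (int \<times> 'g \<Rightarrow> 'k) \<Rightarrow> (int \<times> 'g \<Rightarrow> 'k) \<Rightarrow> (int \<times> 'g \<Rightarrow> 'k)) = (\<lambda>a b. \<lambda>(m, g). if m \<in> {0..<int n} \<and> g \<in> N then
   (\<Sum>m1\<in>{0..<int n}. \<Sum>f\<in>N. a (m1, f) * b ((m - m1) mod int n, dv f g)) else 0)"
    by (intro ext, rule gm_pt)
  have bc: "(bismash_carrier H N :: ('g \<times> 'g \<Rightarrow> 'k) set) = {a. \<forall>x. x \<notin> H \<times> N \<longrightarrow> a x = 0}"
    by (simp add: bismash_carrier_def)
  have ex: "\<exists>\<phi> :: ('g \<times> 'g \<Rightarrow> 'k) \<Rightarrow> (int \<times> 'g \<Rightarrow> 'k).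
    kalg_iso {a. \<forall>x. x \<notin> H \<times> N \<longrightarrow> a x = 0}
     (\<lambda>a b. \<lambda>(l, g). if l \<in> H \<and> g \<in> N then (\<Sum>f\<in>N. a (l, f) * b (l, dv f g)) else 0)
     (\<lambda>(l, f). if l \<in> H \<and> f = \<one>\<^bsub>G\<^esub> then 1 else 0)
     {a. \<forall>x. x \<notin> {0..<int n} \<times> N \<longrightarrow> a x = 0}
     (\<lambda>a b. \<lambda>(m, g). if m \<in> {0..<int n} \<and> g \<in> N then
   (\<Sum>m1\<in>{0..<int n}. \<Sum>f\<in>N. a (m1, f) * b ((m - m1) mod int n, dv f g)) else 0)
     (\<lambda>z. if z = (0, \<one>\<^bsub>G\<^esub>) then 1 else 0) \<phi>"
    by (rule abstract_ex[OF ac n_def[symmetric] n0 finH finN \<rho> dv e])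
  show "\<exists>\<phi> :: ('g \<times> 'g \<Rightarrow> 'k) \<Rightarrow> (int \<times> 'g \<Rightarrow> 'k).
       kalg_iso (bismash_carrier H N) (bismash_mult G H N) (bismash_one G H N)
         (galg_carrier (integer_mod_group (card H) \<times>\<times> G\<lparr>carrier := N\<rparr>))
         (galg_mult (integer_mod_group (card H) \<times>\<times> G\<lparr>carrier := N\<rparr>))
         (galg_one (integer_mod_group (card H) \<times>\<times> G\<lparr>carrier := N\<rparr>)) \<phi>"
    unfolding bm bo bc n_def[symmetric] K_def[symmetric] gc go gmK using ex .
qed

end
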